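(* Let $G$ be a countable group, let $X$ be an incontractible $G$-flow and let $Y$ be a minimal, proximal $G$-flow. Then $X$ and $Y$ are disjoint.
   Context: A $G$-flow is a compact Hausdorff space with an action of $G$ by homeomorphisms. A point $x$ of a $G$-flow is minimal if $\overline{G\cdot x}$ is a minimal flow (every orbit in it dense). A $G$-flow $X$ is incontractible if for every $n\in\mathbb{N}$ the minimal points of $X^n$ (diagonal action) are dense in $X^n$. A $G$-flow $Y$ is proximal if for all $y_1,y_2\in Y$ there exist $z\in Y$ and a net $(g_i)$ in $G$ with $g_iy_1\to z$ and $g_iy_2\to z$. Two $G$-flows $X,Y$ are disjoint if the only closed $G$-invariant subset of $X\times Y$ projecting onto both factors is $X\times Y$. *)

theory Defs
  imports "HOL-Analysis.Analysis" "HOL-Algebra.Group"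
begin

definition gflow :: "('g, 'm) monoid_scheme \<Rightarrow> 'x topology \<Rightarrow> ('g \<Rightarrow> 'x \<Rightarrow> 'x) \<Rightarrow> bool" where
  "gflow G X act \<longleftrightarrow> group G \<and> compact_space X \<and> Hausdorff_space X
     \<and> (\<forall>g\<in>carrier G. homeomorphic_map X X (act g))
     \<and> (\<forall>x\<in>topspace X. act \<one>\<^bsub>G\<^esub> x = x)
     \<and> (\<forall>g\<in>carrier G. \<forall>h\<in>carrier G. \<forall>x\<in>topspace X.
           act (g \<otimes>\<^bsub>G\<^esub> h) x = act g (act h x))"

definition orbit :: "('g, 'm) monoid_scheme \<Rightarrow> ('g \<Rightarrow> 'x \<Rightarrow> 'x) \<Rightarrow> 'x \<Rightarrow> 'x set" where
  "orbit G act x = (\<lambda>g. act g x) ` carrier G"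

definition minimal_point :: "('g, 'm) monoid_scheme \<Rightarrow> 'x topology \<Rightarrow> ('g \<Rightarrow> 'x \<Rightarrow> 'x) \<Rightarrow> 'x \<Rightarrow> bool" where
  "minimal_point G X act x \<longleftrightarrow> x \<in> topspace X \<and>
     (\<forall>z \<in> X closure_of orbit G act x. X closure_of orbit G act z = X closure_of orbit G act x)"

definition minimal_flow :: "('g, 'm) monoid_scheme \<Rightarrow> 'x topology \<Rightarrow> ('g \<Rightarrow> 'x \<Rightarrow> 'x) \<Rightarrow> bool" where
  "minimal_flow G X act \<longleftrightarrow> gflow G X act \<and>
     (\<forall>x\<in>topspace X. X closure_of orbit G act x = topspace X)"

definition power_space :: "'x topology \<Rightarrow> nat \<Rightarrow> (nat \<Rightarrow> 'x) topology" where
  "power_space X n = product_topology (\<lambda>i. X) {..<n}"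

definition power_act :: "('g \<Rightarrow> 'x \<Rightarrow> 'x) \<Rightarrow> nat \<Rightarrow> 'g \<Rightarrow> (nat \<Rightarrow> 'x) \<Rightarrow> (nat \<Rightarrow> 'x)" where
  "power_act act n g u = restrict (\<lambda>i. act g (u i)) {..<n}"

definition incontractible :: "('g, 'm) monoid_scheme \<Rightarrow> 'x topology \<Rightarrow> ('g \<Rightarrow> 'x \<Rightarrow> 'x) \<Rightarrow> bool" where
  "incontractible G X act \<longleftrightarrow> gflow G X act \<and>
     (\<forall>n::nat. power_space X n closure_of
         {u. minimal_point G (power_space X n) (power_act act n) u} = topspace (power_space X n))"

text \<open>Proximality; nets in G are rendered as proper filters on G concentrated on carrier G.\<close>
definition proximal :: "('g, 'm) monoid_scheme \<Rightarrow> 'y topology \<Rightarrow> ('g \<Rightarrow> 'y \<Rightarrow> 'y) \<Rightarrow> bool" where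
  "proximal G Y act \<longleftrightarrow> gflow G Y act \<and>
     (\<forall>y1\<in>topspace Y. \<forall>y2\<in>topspace Y. \<exists>z\<in>topspace Y. \<exists>F :: 'g filter.
        F \<noteq> bot \<and> eventually (\<lambda>g. g \<in> carrier G) F \<and>
        limitin Y (\<lambda>g. act g y1) z F \<and> limitin Y (\<lambda>g. act g y2) z F)"

definition disjoint_flows :: "('g, 'm) monoid_scheme \<Rightarrow> 'x topology \<Rightarrow> ('g \<Rightarrow> 'x \<Rightarrow> 'x)
     \<Rightarrow> 'y topology \<Rightarrow> ('g \<Rightarrow> 'y \<Rightarrow> 'y) \<Rightarrow> bool" where
  "disjoint_flows G X a Y b \<longleftrightarrow>
     (\<forall>W. closedin (prod_topology X Y) W
        \<and> (\<forall>g\<in>carrier G. \<forall>p\<in>W. (a g (fst p), b g (snd p)) \<in> W)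
        \<and> fst ` W = topspace X \<and> snd ` W = topspace Y
        \<longrightarrow> W = topspace X \<times> topspace Y)"

end

theory Submission
  imports Defs
begin


lemma limitin_in_closure:
  assumes "limitin X f l F" "F \<noteq> bot" "eventually (\<lambda>x. f x \<in> S) F"
  shows "l \<in> X closure_of S"
  unfolding in_closure_of
proof (intro conjI allI impI)
  show "l \<in> topspace X" by (rule limitin_topspace[OF assms(1)])
  fix T assume T: "l \<in> T \<and> openin X T"
  then have "eventually (\<lambda>x. f x \<in> T) F" using limitinD[OF assms(1)] by simp
  then have "eventually (\<lambda>x. f x \<in> S \<and> f x \<in> T) F" using assms(3) by (simp add: eventually_conj)
  then have "\<exists>x. f x \<in> S \<and> f x \<in> T" using assms(2) by (simp add: eventually_happens')
  then show "\<exists>y. y \<in> S \<and> y \<in> T" by blast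
qed

lemma proj_closure:
  assumes "compact_space T" "Hausdorff_space S" "continuous_map T S f" "A \<subseteq> topspace T"
  shows "S closure_of (f ` A) \<subseteq> f ` (T closure_of A)"
proof -
  have "compactin T (T closure_of A)" by (simp add: assms(1) closedin_compact_space)
  then have "compactin S (f ` (T closure_of A))" using assms(3) image_compactin by blast
  then have c: "closedin S (f ` (T closure_of A))" using assms(2) compactin_imp_closedin by blast
  have "A \<subseteq> T closure_of A" using assms(4) by (rule closure_of_subset)
  then have "f ` A \<subseteq> f ` (T closure_of A)" by (rule image_mono)
  then show ?thesis using c by (rule closure_of_minimal)
qed

lemma closedin_all_lt:
  fixes k :: nat
  assumes "\<And>i. i<k \<Longrightarrow> closedin T {x\<in>topspace T. P i x}"
  shows "closedin T {x\<in>topspace T. \<forall>i<k. P i x}"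
  using assms
proof (induction k)
  case 0 then show ?case by simp
next
  case (Suc k)
  have e: "{x\<in>topspace T. \<forall>i<Suc k. P i x} = {x\<in>topspace T. \<forall>i<k. P i x} \<inter> {x\<in>topspace T. P k x}"
    using less_Suc_eq by auto
  have "closedin T {x\<in>topspace T. \<forall>i<k. P i x}" using Suc by simp
  moreover have "closedin T {x\<in>topspace T. P k x}" using Suc by simp
  ultimately show ?case unfolding e by (rule closedin_Int)
qed

lemma gflow_cont: "gflow G X act \<Longrightarrow> g \<in> carrier G \<Longrightarrow> continuous_map X X (act g)"
  unfolding gflow_def using homeomorphic_imp_continuous_map by blast

lemma gflow_top:
  assumes "gflow G X act" "g \<in> carrier G" "x \<in> topspace X"
  shows "act g x \<in> topspace X"
proof -
  have "act g ` topspace X \<subseteq> topspace X"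
    by (rule continuous_map_image_subset_topspace[OF gflow_cont[OF assms(1,2)]])
  then show ?thesis using assms(3) by (simp add: image_subset_iff)
qed

lemma power_act_top:
  assumes "gflow G X act" "g \<in> carrier G" "u \<in> topspace (power_space X n)"
  shows "power_act act n g u \<in> topspace (power_space X n)"
proof -
  have "\<And>i. i < n \<Longrightarrow> u i \<in> topspace X" using assms(3) unfolding power_space_def by auto
  then show ?thesis unfolding power_space_def power_act_def using gflow_top[OF assms(1,2)] by auto
qed

lemma power_act_app: "i < n \<Longrightarrow> power_act act n g u i = act g (u i)"
  unfolding power_act_def by simp

lemma power_act_one:
  assumes "gflow G X act" "u \<in> topspace (power_space X n)"
  shows "power_act act n \<one>\<^bsub>G\<^esub> u = u"
proof
  fix i
  have ext: "u \<in> extensional {..<n}" using assms(2) unfolding power_space_def by (simp add: PiE_def)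
  have top: "\<And>i. i < n \<Longrightarrow> u i \<in> topspace X" using assms(2) unfolding power_space_def by auto
  show "power_act act n \<one>\<^bsub>G\<^esub> u i = u i"
  proof (cases "i < n")
    case True then show ?thesis using top assms(1) unfolding power_act_def gflow_def by simp
  next
    case False then show ?thesis using ext unfolding power_act_def extensional_def by simp
  qed
qed

lemma power_space_compact: "gflow G X act \<Longrightarrow> compact_space (power_space X n)"
  unfolding power_space_def gflow_def by (simp add: compact_space_product_topology)

lemma power_space_Hausdorff: "gflow G X act \<Longrightarrow> Hausdorff_space (power_space X n)"
  unfolding power_space_def gflow_def by (simp add: Hausdorff_space_product_topology)

lemma power_proj: "i < n \<Longrightarrow> continuous_map (power_space X n) X (\<lambda>u. u i)"
  unfolding power_space_def by (rule continuous_map_product_projection) simp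

lemma self_in_orbit_closure:
  assumes "gflow G X act" "u \<in> topspace (power_space X n)"
  shows "u \<in> power_space X n closure_of orbit G (power_act act n) u"
proof -
  have "\<one>\<^bsub>G\<^esub> \<in> carrier G" using assms(1) unfolding gflow_def by (simp add: group.is_monoid monoid.one_closed)
  then have "u \<in> orbit G (power_act act n) u" unfolding orbit_def using power_act_one[OF assms] by force
  then show ?thesis using assms(2) closure_of_subset_Int by fastforce
qed

lemma gflow_compact: "gflow G X act \<Longrightarrow> compact_space X"
  unfolding gflow_def by simp

lemma gflow_Hausdorff: "gflow G X act \<Longrightarrow> Hausdorff_space X"
  unfolding gflow_def by simp

lemma closedin_W_coord:
  assumes W: "closedin (prod_topology X Y) W" and i: "i < n"
    and cf: "continuous_map T (prod_topology (power_space X n) Y) h"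
  shows "closedin T {p \<in> topspace T. (fst (h p) i, snd (h p)) \<in> W}"
proof -
  have c1: "continuous_map (prod_topology (power_space X n) Y) X (\<lambda>p. fst p i)"
    using continuous_map_compose[OF continuous_map_fst power_proj[OF i]] by (simp add: o_def)
  have "continuous_map (prod_topology (power_space X n) Y) (prod_topology X Y) (\<lambda>p. (fst p i, snd p))"
    using c1 continuous_map_snd by (rule continuous_map_pairedI)
  then have "continuous_map T (prod_topology X Y) (\<lambda>p. (fst (h p) i, snd (h p)))"
    using continuous_map_compose[OF cf] by (simp add: o_def)
  then show ?thesis using W by (rule closedin_continuous_map_preimage)
qed

lemma lift_point:
  assumes gX: "gflow G X a" and gY: "gflow G Y b"
    and W: "closedin (prod_topology X Y) W"
    and inv: "\<forall>g\<in>carrier G. \<forall>p\<in>W. (a g (fst p), b g (snd p)) \<in> W"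
    and v: "v \<in> topspace (power_space X n)" and z: "z \<in> topspace Y"
    and vz: "\<forall>i<n. (v i, z) \<in> W"
    and u: "u \<in> power_space X n closure_of orbit G (power_act a n) v"
  shows "\<exists>z'\<in>topspace Y. \<forall>i<n. (u i, z') \<in> W"
proof -
  define T where "T = prod_topology (power_space X n) Y"
  define c where "c = (\<lambda>g p. (power_act a n g (fst p), b g (snd p)))"
  define P where "P = {p\<in>topspace T. \<forall>i<n. (fst p i, snd p) \<in> W}"
  have cP: "closedin T P" unfolding P_def
  proof (rule closedin_all_lt)
    fix i assume "i < n"
    then show "closedin T {p \<in> topspace T. (fst p i, snd p) \<in> W}"
      using closedin_W_coord[OF W, of i n T id] unfolding T_def by simp
  qed
  have orbP: "orbit G c (v, z) \<subseteq> P"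
  proof
    fix q assume "q \<in> orbit G c (v, z)"
    then obtain g where g: "g \<in> carrier G" and q: "q = c g (v, z)" unfolding orbit_def by blast
    have t: "q \<in> topspace T" unfolding q c_def T_def
      using power_act_top[OF gX g v] gflow_top[OF gY g z] by simp
    have "\<forall>i<n. (fst q i, snd q) \<in> W"
    proof (intro allI impI)
      fix i assume i: "i < n"
      have "(a g (fst (v i, z)), b g (snd (v i, z))) \<in> W" using inv g vz i by blast
      then show "(fst q i, snd q) \<in> W" unfolding q c_def using i by (simp add: power_act_app)
    qed
    then show "q \<in> P" unfolding P_def using t by simp
  qed
  have clP: "T closure_of orbit G c (v, z) \<subseteq> P"
    using cP orbP by (simp add: closure_of_minimal)
  have PT: "P \<subseteq> topspace T" unfolding P_def by blast
  have cT: "compact_space T" unfolding T_def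
    using power_space_compact[OF gX] gflow_compact[OF gY] by (simp add: compact_space_prod_topology)
  have fo: "fst ` orbit G c (v, z) = orbit G (power_act a n) v"
    unfolding orbit_def c_def by (simp add: image_image)
  have "power_space X n closure_of (fst ` orbit G c (v, z)) \<subseteq> fst ` (T closure_of orbit G c (v, z))"
    using proj_closure[where f=fst, OF cT power_space_Hausdorff[OF gX]] continuous_map_fst orbP PT
    unfolding T_def by blast
  then have "u \<in> fst ` (T closure_of orbit G c (v, z))" using u fo by auto
  then obtain p where p: "p \<in> P" "fst p = u" using clP by blast
  then have "snd p \<in> topspace Y" "\<forall>i<n. (u i, snd p) \<in> W" unfolding P_def T_def
    by (auto simp: mem_Times_iff)
  then show ?thesis by blast
qed

lemma step_point:
  assumes gX: "gflow G X a" and gY: "gflow G Y b"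
    and W: "closedin (prod_topology X Y) W"
    and inv: "\<forall>g\<in>carrier G. \<forall>p\<in>W. (a g (fst p), b g (snd p)) \<in> W"
    and fW: "fst ` W = topspace X"
    and prox: "proximal G Y b"
    and k: "k < n"
    and v: "v \<in> topspace (power_space X n)" and z: "z \<in> topspace Y"
    and vz: "\<forall>i<k. (v i, z) \<in> W"
  shows "\<exists>w z0. w \<in> power_space X n closure_of orbit G (power_act a n) v \<and> z0 \<in> topspace Y
           \<and> (\<forall>i<Suc k. (w i, z0) \<in> W)"
proof -
  have vk: "v k \<in> topspace X" using v k unfolding power_space_def by auto
  then have "v k \<in> fst ` W" using fW by simp
  then obtain pk where pk: "pk \<in> W" "v k = fst pk" by blast
  define y where "y = snd pk"
  have y: "(v k, y) \<in> W" using pk unfolding y_def by simp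
  have WT: "W \<subseteq> topspace X \<times> topspace Y" using closedin_subset[OF W] by simp
  then have yT: "y \<in> topspace Y" using y by blast
  obtain z0 F where z0: "z0 \<in> topspace Y" and F: "F \<noteq> bot" "eventually (\<lambda>g. g \<in> carrier G) F"
    and l1: "limitin Y (\<lambda>g. b g z) z0 F" and l2: "limitin Y (\<lambda>g. b g y) z0 F"
  proof -
    have "\<forall>y1\<in>topspace Y. \<forall>y2\<in>topspace Y. \<exists>z\<in>topspace Y. \<exists>F.
        F \<noteq> bot \<and> eventually (\<lambda>g. g \<in> carrier G) F \<and>
        limitin Y (\<lambda>g. b g y1) z F \<and> limitin Y (\<lambda>g. b g y2) z F"
      using prox unfolding proximal_def by (rule conjunct2)
    then have "\<exists>z0\<in>topspace Y. \<exists>F.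
        F \<noteq> bot \<and> eventually (\<lambda>g. g \<in> carrier G) F \<and>
        limitin Y (\<lambda>g. b g z) z0 F \<and> limitin Y (\<lambda>g. b g y) z0 F"
      using z yT by simp
    then show ?thesis using that by blast
  qed
  define YY where "YY = prod_topology Y Y"
  define d where "d = (\<lambda>g q. (b g (fst q), b g (snd q)))"
  have lim: "limitin YY (\<lambda>g. (b g z, b g y)) (z0, z0) F"
    unfolding YY_def limitin_pairwise using l1 l2 by (simp add: o_def)
  have ev: "eventually (\<lambda>g. (b g z, b g y) \<in> orbit G d (z, y)) F"
  proof (rule eventually_mono[OF F(2)])
    fix g assume "g \<in> carrier G"
    then show "(b g z, b g y) \<in> orbit G d (z, y)" unfolding orbit_def d_def
      by (simp add: rev_image_eqI)
  qed
  have zz: "(z0, z0) \<in> YY closure_of orbit G d (z, y)"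
    by (rule limitin_in_closure[OF lim F(1) ev])
  define T where "T = prod_topology (power_space X n) YY"
  define c where "c = (\<lambda>g p. (power_act a n g (fst p), d g (snd p)))"
  define Q where "Q = {p\<in>topspace T. (\<forall>i<k. (fst p i, fst (snd p)) \<in> W) \<and> (fst p k, snd (snd p)) \<in> W}"
  have cont1: "continuous_map T (prod_topology (power_space X n) Y) (\<lambda>p. (fst p, fst (snd p)))"
    unfolding T_def YY_def
    by (intro continuous_map_pairedI continuous_map_fst continuous_map_compose[OF continuous_map_snd continuous_map_fst, unfolded o_def])
  have cont2: "continuous_map T (prod_topology (power_space X n) Y) (\<lambda>p. (fst p, snd (snd p)))"
    unfolding T_def YY_def
    by (intro continuous_map_pairedI continuous_map_fst continuous_map_compose[OF continuous_map_snd continuous_map_snd, unfolded o_def])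
  have c1: "closedin T {p\<in>topspace T. \<forall>i<k. (fst p i, fst (snd p)) \<in> W}"
  proof (rule closedin_all_lt)
    fix i assume "i < k"
    then show "closedin T {p \<in> topspace T. (fst p i, fst (snd p)) \<in> W}"
      using closedin_W_coord[OF W _ cont1, of i] k by simp
  qed
  have c2: "closedin T {p\<in>topspace T. (fst p k, snd (snd p)) \<in> W}"
    using closedin_W_coord[OF W k cont2] by simp
  have "Q = {p\<in>topspace T. \<forall>i<k. (fst p i, fst (snd p)) \<in> W} \<inter> {p\<in>topspace T. (fst p k, snd (snd p)) \<in> W}"
    unfolding Q_def by blast
  then have cQ: "closedin T Q" using c1 c2 by (simp add: closedin_Int)
  have orbQ: "orbit G c (v, (z, y)) \<subseteq> Q"
  proof
    fix q assume "q \<in> orbit G c (v, (z, y))"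
    then obtain g where g: "g \<in> carrier G" and q: "q = c g (v, (z, y))" unfolding orbit_def by blast
    have t: "q \<in> topspace T" unfolding q c_def d_def T_def YY_def
      using power_act_top[OF gX g v] gflow_top[OF gY g z] gflow_top[OF gY g yT] by simp
    have "\<forall>i<k. (fst q i, fst (snd q)) \<in> W"
    proof (intro allI impI)
      fix i assume i: "i < k"
      have "(a g (fst (v i, z)), b g (snd (v i, z))) \<in> W" using inv g vz i by blast
      then show "(fst q i, fst (snd q)) \<in> W" unfolding q c_def d_def using i k by (simp add: power_act_app)
    qed
    moreover have "(fst q k, snd (snd q)) \<in> W"
    proof -
      have "(a g (fst (v k, y)), b g (snd (v k, y))) \<in> W" using inv g y by blast
      then show ?thesis unfolding q c_def d_def using k by (simp add: power_act_app)
    qed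
    ultimately show "q \<in> Q" unfolding Q_def using t by simp
  qed
  have clQ: "T closure_of orbit G c (v, (z, y)) \<subseteq> Q"
    using cQ orbQ by (simp add: closure_of_minimal)
  have QT: "Q \<subseteq> topspace T" unfolding Q_def by blast
  have cT: "compact_space T" unfolding T_def YY_def
    using power_space_compact[OF gX] gflow_compact[OF gY] by (simp add: compact_space_prod_topology)
  have HYY: "Hausdorff_space YY" unfolding YY_def
    using gflow_Hausdorff[OF gY] by (simp add: Hausdorff_space_prod_topology)
  have so: "snd ` orbit G c (v, (z, y)) = orbit G d (z, y)"
    unfolding orbit_def c_def by (simp add: image_image)
  have fo: "fst ` orbit G c (v, (z, y)) = orbit G (power_act a n) v"
    unfolding orbit_def c_def by (simp add: image_image)
  have "YY closure_of (snd ` orbit G c (v, (z, y))) \<subseteq> snd ` (T closure_of orbit G c (v, (z, y)))"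
    using proj_closure[where f=snd, OF cT HYY] continuous_map_snd orbQ QT
    unfolding T_def by blast
  then have "(z0, z0) \<in> snd ` (T closure_of orbit G c (v, (z, y)))" using zz so by auto
  then obtain p where p': "(z0, z0) = snd p" "p \<in> T closure_of orbit G c (v, (z, y))" by (rule imageE)
  then have p: "p \<in> T closure_of orbit G c (v, (z, y))" "snd p = (z0, z0)" by simp_all
  have sub: "fst ` (T closure_of orbit G c (v, (z, y))) \<subseteq> power_space X n closure_of (fst ` orbit G c (v, (z, y)))"
    unfolding T_def by (rule continuous_map_image_closure_subset[OF continuous_map_fst])
  have "fst p \<in> fst ` (T closure_of orbit G c (v, (z, y)))" using p(1) by (rule imageI)
  then have "fst p \<in> power_space X n closure_of (fst ` orbit G c (v, (z, y)))" using sub by (rule rev_subsetD)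
  then have w: "fst p \<in> power_space X n closure_of orbit G (power_act a n) v" unfolding fo .
  have pQ: "p \<in> Q" using p(1) clQ by blast
  have "\<forall>i<Suc k. (fst p i, z0) \<in> W"
  proof (intro allI impI)
    fix i assume "i < Suc k"
    then consider "i < k" | "i = k" by linarith
    then show "(fst p i, z0) \<in> W"
    proof cases
      case 1 then show ?thesis using pQ p(2) unfolding Q_def by simp
    next
      case 2 then show ?thesis using pQ p(2) unfolding Q_def by simp
    qed
  qed
  then show ?thesis using w z0 by blast
qed

lemma claim_points:
  assumes gX: "gflow G X a" and gY: "gflow G Y b"
    and W: "closedin (prod_topology X Y) W"
    and inv: "\<forall>g\<in>carrier G. \<forall>p\<in>W. (a g (fst p), b g (snd p)) \<in> W"
    and fW: "fst ` W = topspace X"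
    and prox: "proximal G Y b"
    and u: "minimal_point G (power_space X n) (power_act a n) u"
    and y0: "y0 \<in> topspace Y"
  shows "k \<le> n \<Longrightarrow> \<exists>v z. v \<in> power_space X n closure_of orbit G (power_act a n) u \<and> z \<in> topspace Y
           \<and> (\<forall>i<k. (v i, z) \<in> W)"
proof (induction k)
  case 0
  have "u \<in> topspace (power_space X n)" using u unfolding minimal_point_def by simp
  then have "u \<in> power_space X n closure_of orbit G (power_act a n) u"
    by (rule self_in_orbit_closure[OF gX])
  then show ?case using y0 by blast
next
  case (Suc k)
  then obtain v z where v: "v \<in> power_space X n closure_of orbit G (power_act a n) u"
    and z: "z \<in> topspace Y" and vz: "\<forall>i<k. (v i, z) \<in> W" by auto
  have vT: "v \<in> topspace (power_space X n)" using closure_of_subset_topspace v by (rule subsetD)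
  have kn: "k < n" using Suc.prems by simp
  obtain w z0 where w: "w \<in> power_space X n closure_of orbit G (power_act a n) v"
    and z0: "z0 \<in> topspace Y" and wz: "\<forall>i<Suc k. (w i, z0) \<in> W"
    using step_point[OF gX gY W inv fW prox kn vT z vz] by blast
  have "power_space X n closure_of orbit G (power_act a n) v = power_space X n closure_of orbit G (power_act a n) u"
    using u v unfolding minimal_point_def by blast
  then show ?case using w z0 wz by auto
qed

lemma final_point:
  assumes gX: "gflow G X a" and gY: "gflow G Y b"
    and W: "closedin (prod_topology X Y) W"
    and inv: "\<forall>g\<in>carrier G. \<forall>p\<in>W. (a g (fst p), b g (snd p)) \<in> W"
    and fW: "fst ` W = topspace X"
    and prox: "proximal G Y b"
    and u: "minimal_point G (power_space X n) (power_act a n) u"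
    and y0: "y0 \<in> topspace Y"
  shows "\<exists>z'\<in>topspace Y. \<forall>i<n. (u i, z') \<in> W"
proof -
  obtain v z where v: "v \<in> power_space X n closure_of orbit G (power_act a n) u"
    and z: "z \<in> topspace Y" and vz: "\<forall>i<n. (v i, z) \<in> W"
    using claim_points[OF gX gY W inv fW prox u y0, of n] by blast
  have vT: "v \<in> topspace (power_space X n)" using closure_of_subset_topspace v by (rule subsetD)
  have uT: "u \<in> topspace (power_space X n)" using u unfolding minimal_point_def by simp
  have "power_space X n closure_of orbit G (power_act a n) v = power_space X n closure_of orbit G (power_act a n) u"
    using u v unfolding minimal_point_def by blast
  then have "u \<in> power_space X n closure_of orbit G (power_act a n) v"
    using self_in_orbit_closure[OF gX uT] by simp
  then show ?thesis by (rule lift_point[OF gX gY W inv vT z vz])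
qed


theorem proposition4p4:
  fixes G :: "('g, 'm) monoid_scheme"
    and X :: "'x topology" and a :: "'g \<Rightarrow> 'x \<Rightarrow> 'x"
    and Y :: "'y topology" and b :: "'g \<Rightarrow> 'y \<Rightarrow> 'y"
  assumes "group G" and "countable (carrier G)"
    and "incontractible G X a"
    and "minimal_flow G Y b" and "proximal G Y b"
  shows "disjoint_flows G X a Y b"
proof -
  have gX: "gflow G X a" using assms(3) unfolding incontractible_def by simp
  have gY: "gflow G Y b" using assms(4) unfolding minimal_flow_def by simp
  have grp: "group G" by (rule assms(1))
  show ?thesis unfolding disjoint_flows_def
  proof (intro allI impI)
    fix W assume H: "closedin (prod_topology X Y) W
        \<and> (\<forall>g\<in>carrier G. \<forall>p\<in>W. (a g (fst p), b g (snd p)) \<in> W)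
        \<and> fst ` W = topspace X \<and> snd ` W = topspace Y"
    then have W: "closedin (prod_topology X Y) W"
      and inv: "\<forall>g\<in>carrier G. \<forall>p\<in>W. (a g (fst p), b g (snd p)) \<in> W"
      and fW: "fst ` W = topspace X" by simp_all
    have WT: "W \<subseteq> topspace X \<times> topspace Y" using closedin_subset[OF W] by simp
    show "W = topspace X \<times> topspace Y"
    proof (rule ccontr)
      assume "W \<noteq> topspace X \<times> topspace Y"
      then obtain x0 y0 where x0: "x0 \<in> topspace X" and y0: "y0 \<in> topspace Y" and nW: "(x0, y0) \<notin> W"
        using WT by auto
      have oo: "openin (prod_topology X Y) (topspace (prod_topology X Y) - W)"
        using W by (simp add: closedin_def)
      have mem: "(x0, y0) \<in> topspace (prod_topology X Y) - W" using x0 y0 nW by simp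
      have "\<forall>x y. (x, y) \<in> topspace (prod_topology X Y) - W \<longrightarrow> (\<exists>U V. openin X U \<and> openin Y V \<and> x \<in> U \<and> y \<in> V \<and> U \<times> V \<subseteq> topspace (prod_topology X Y) - W)"
        using oo by (simp only: openin_prod_topology_alt)
      then have "\<exists>U V. openin X U \<and> openin Y V \<and> x0 \<in> U \<and> y0 \<in> V \<and> U \<times> V \<subseteq> topspace (prod_topology X Y) - W"
        using mem by (elim allE impE)
      then obtain U V where U: "openin X U" and V: "openin Y V" and x0U: "x0 \<in> U" and y0V: "y0 \<in> V"
        and UV: "U \<times> V \<subseteq> topspace (prod_topology X Y) - W" by (elim exE conjE)
      define pre where "pre = (\<lambda>g. {y \<in> topspace Y. b g y \<in> V})"
      have preo: "\<forall>B\<in>pre ` carrier G. openin Y B"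
      proof
        fix B assume "B \<in> pre ` carrier G"
        then obtain g where g: "g \<in> carrier G" and B: "B = pre g" by (rule imageE)
        show "openin Y B" unfolding B pre_def
          by (rule openin_continuous_map_preimage[OF gflow_cont[OF gY g] V])
      qed
      have cov: "topspace Y \<subseteq> \<Union>(pre ` carrier G)"
      proof
        fix y assume y: "y \<in> topspace Y"
        have "Y closure_of orbit G b y = topspace Y" using assms(4) y unfolding minimal_flow_def by simp
        then have "V \<inter> Y closure_of orbit G b y \<noteq> {}" using y0 y0V by blast
        then have "V \<inter> orbit G b y \<noteq> {}" using openin_Int_closure_of_eq_empty[OF V] by simp
        then obtain g where g: "g \<in> carrier G" "b g y \<in> V" unfolding orbit_def by blast
        then show "y \<in> \<Union>(pre ` carrier G)" unfolding pre_def using y by blast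
      qed
      have "compactin Y (topspace Y)" using gflow_compact[OF gY] unfolding compact_space_def .
      then have "\<forall>\<U>. (\<forall>U \<in> \<U>. openin Y U) \<and> topspace Y \<subseteq> \<Union>\<U>
          \<longrightarrow> (\<exists>\<F>. finite \<F> \<and> \<F> \<subseteq> \<U> \<and> topspace Y \<subseteq> \<Union>\<F>)"
        unfolding compactin_def by (rule conjunct2)
      then have "\<exists>\<F>. finite \<F> \<and> \<F> \<subseteq> pre ` carrier G \<and> topspace Y \<subseteq> \<Union>\<F>"
        using preo cov by simp
      then obtain FF where FF: "finite FF" "FF \<subseteq> pre ` carrier G" "topspace Y \<subseteq> \<Union>FF"
        by (elim exE conjE)
      obtain Hs where Hs: "Hs \<subseteq> carrier G" "finite Hs" "FF = pre ` Hs"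
        using finite_subset_image[OF FF(1) FF(2)] by (elim exE conjE)
      obtain hs where hs: "set hs = Hs" using finite_list[OF Hs(2)] by blast
      define k where "k = length hs"
      have hsG: "\<And>i. i < k \<Longrightarrow> hs ! i \<in> carrier G" using hs Hs(1) unfolding k_def by auto
      have covk: "\<forall>y\<in>topspace Y. \<exists>i<k. b (hs ! i) y \<in> V"
      proof
        fix y assume y: "y \<in> topspace Y"
        then obtain h where h: "h \<in> Hs" "y \<in> pre h" using FF(3) Hs(3) by blast
        then obtain i where i: "i < k" "hs ! i = h" using hs unfolding k_def by (auto simp: in_set_conv_nth)
        show "\<exists>i<k. b (hs ! i) y \<in> V" using h(2) i unfolding pre_def by blast
      qed
      define pm where "pm = (\<lambda>v. restrict (\<lambda>i. a (hs ! i) (v i)) {..<k})"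
      define Oset where "Oset = {v \<in> topspace (power_space X k). pm v \<in> PiE {..<k} (\<lambda>i. U)}"
      have pmc: "continuous_map (power_space X k) (power_space X k) pm"
        unfolding power_space_def continuous_map_componentwise
      proof (intro conjI ballI)
        show "pm ` topspace (product_topology (\<lambda>i. X) {..<k}) \<subseteq> extensional {..<k}"
          unfolding pm_def by auto
        fix i assume i: "i \<in> {..<k}"
        have "continuous_map (power_space X k) X (a (hs ! i) \<circ> (\<lambda>u. u i))"
          using i power_proj gflow_cont[OF gX hsG] by (intro continuous_map_compose) auto
        then show "continuous_map (product_topology (\<lambda>i. X) {..<k}) X (\<lambda>x. pm x i)"
          unfolding pm_def power_space_def using i by (simp add: o_def)
      qed
      have "openin (product_topology (\<lambda>i. X) {..<k}) (PiE {..<k} (\<lambda>i. U))"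
        unfolding openin_PiE_gen using U by simp
      then have Oo: "openin (power_space X k) Oset"
        unfolding Oset_def using openin_continuous_map_preimage[OF pmc] unfolding power_space_def by blast
      define v0 where "v0 = restrict (\<lambda>i. a (inv\<^bsub>G\<^esub> (hs ! i)) x0) {..<k}"
      have v0T: "v0 \<in> topspace (power_space X k)"
      proof -
        have "\<And>i. i < k \<Longrightarrow> a (inv\<^bsub>G\<^esub> (hs ! i)) x0 \<in> topspace X"
        proof -
          fix i assume i: "i < k"
          have "inv\<^bsub>G\<^esub> (hs ! i) \<in> carrier G" using hsG[OF i] grp by (simp add: group.inv_closed)
          then show "a (inv\<^bsub>G\<^esub> (hs ! i)) x0 \<in> topspace X" using gflow_top[OF gX _ x0] by simp
        qed
        then show ?thesis unfolding v0_def power_space_def by simp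
      qed
      have "\<And>i. i < k \<Longrightarrow> a (hs ! i) (a (inv\<^bsub>G\<^esub> (hs ! i)) x0) = x0"
      proof -
        fix i assume i: "i < k"
        have h: "hs ! i \<in> carrier G" "inv\<^bsub>G\<^esub> (hs ! i) \<in> carrier G"
          using hsG[OF i] grp group.inv_closed by auto
        have "a (hs ! i) (a (inv\<^bsub>G\<^esub> (hs ! i)) x0) = a (hs ! i \<otimes>\<^bsub>G\<^esub> inv\<^bsub>G\<^esub> (hs ! i)) x0"
          using gX h x0 unfolding gflow_def by simp
        also have "\<dots> = a \<one>\<^bsub>G\<^esub> x0" using grp h(1) group.r_inv by metis
        also have "\<dots> = x0" using gX x0 unfolding gflow_def by simp
        finally show "a (hs ! i) (a (inv\<^bsub>G\<^esub> (hs ! i)) x0) = x0" .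
      qed
      then have "pm v0 \<in> PiE {..<k} (\<lambda>i. U)" unfolding pm_def v0_def using x0U by simp
      then have v0O: "v0 \<in> Oset" unfolding Oset_def using v0T by simp
      have "power_space X k closure_of {u. minimal_point G (power_space X k) (power_act a k) u}
          = topspace (power_space X k)" using assms(3) unfolding incontractible_def by simp
      then have "Oset \<inter> power_space X k closure_of {u. minimal_point G (power_space X k) (power_act a k) u} \<noteq> {}"
        using v0O v0T by blast
      then have "Oset \<inter> {u. minimal_point G (power_space X k) (power_act a k) u} \<noteq> {}"
        using openin_Int_closure_of_eq_empty[OF Oo] by simp
      then obtain u where uO: "u \<in> Oset" and u: "minimal_point G (power_space X k) (power_act a k) u" by blast
      obtain z' where z': "z' \<in> topspace Y" and uz: "\<forall>i<k. (u i, z') \<in> W"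
        using final_point[OF gX gY W inv fW assms(5) u y0] by blast
      obtain i where i: "i < k" and iV: "b (hs ! i) z' \<in> V" using covk z' by blast
      have "pm u \<in> PiE {..<k} (\<lambda>i. U)" using uO unfolding Oset_def by simp
      then have iU: "a (hs ! i) (u i) \<in> U" using i unfolding pm_def by auto
      have "(a (hs ! i) (fst (u i, z')), b (hs ! i) (snd (u i, z'))) \<in> W"
        using inv hsG[OF i] uz i by blast
      then have "(a (hs ! i) (u i), b (hs ! i) z') \<in> W" by simp
      moreover have "(a (hs ! i) (u i), b (hs ! i) z') \<in> U \<times> V" using iU iV by simp
      ultimately show False using UV by blast
    qed
  qed
qed


end
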